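(* Let $z_1,\dots,z_n$ and $\zeta_1,\dots,\zeta_{n+1}$ be points of $\overline E\cap U$ such that $V(z_1,\dots,z_n)=V_n(E)$ and $V(\zeta_1,\dots,\zeta_{n+1})=V_{n+1}(E)$. Then \[ \mu(\zeta_1,\dots,\zeta_{n+1})\,M(z_1,\dots,z_n)\le (n+1)\|q\|_{\infty,E}, \] where $\|q\|_{\infty,E}=\sup_{z\in E}|q(z)|$.
   Context: $U$ is the open unit disc and $E\subset U$ is a set with infinitely many points whose set $E_0$ of nontangential limit points has Lebesgue measure zero on $\partial U$ (a point $\zeta\in\partial U$ is a nontangential limit point of $E$ if some sequence $(w_n)$ in $E$ satisfies $w_n\to\zeta$ and $|w_n-\zeta|=O(1-|w_n|)$). The function $q$: if $\overline E\cap\partial U=\emptyset$, $q\equiv1$; otherwise $q$ is holomorphic on $U$ with $0<|q|<1$ on $U$ and $\lim_{z\in E,|z|\to1}q(z)=0$, normalized so that $\sup_U|q|=1$. For $Z_n=(z_1,\dots,z_n)$: $B(Z_n,z)=\prod_{j=1}^n\frac{z-z_j}{1-\overline{z_j}z}$, $B_k(Z_n,z)=\prod_{j\ne k}\frac{z-z_j}{1-\overline{z_j}z}$, $B_q(Z_n,z)=B(Z_n,z)q(z)$ (an empty product equals $1$), $Z_{j-1}=(z_1,\dots,z_{j-1})$. Define $V(Z_n)=\prod_{j=1}^n|B_q(Z_{j-1},z_j)|$, $\mu(Z_n)=\sum_{j=1}^n|B_j(Z_n,z_j)|^{-1}$, $M(Z_n)=\sup_{z\in E}|B_q(Z_n,z)|$,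 and $V_n(E)=\sup_{Z_n\in E^n}V(Z_n)$. *)

theory Defs
  imports "HOL-Analysis.Analysis"
begin

text \<open>Unit disc U is ball 0 1; its boundary is sphere 0 1. Tuples Z_n are lists.\<close>

definition bfac :: "complex \<Rightarrow> complex \<Rightarrow> complex" where
  "bfac a z = (z - a) / (1 - cnj a * z)"

definition Bl :: "complex list \<Rightarrow> complex \<Rightarrow> complex" where
  "Bl Zs z = (\<Prod>j<length Zs. bfac (Zs ! j) z)"

definition Bk :: "complex list \<Rightarrow> nat \<Rightarrow> complex \<Rightarrow> complex" where
  "Bk Zs k z = (\<Prod>j\<in>{j. j < length Zs \<and> j \<noteq> k}. bfac (Zs ! j) z)"

definition Bq :: "(complex \<Rightarrow> complex) \<Rightarrow> complex list \<Rightarrow> complex \<Rightarrow> complex" where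
  "Bq q Zs z = Bl Zs z * q z"

definition Vf :: "(complex \<Rightarrow> complex) \<Rightarrow> complex list \<Rightarrow> real" where
  "Vf q Zs = (\<Prod>j<length Zs. norm (Bq q (take j Zs) (Zs ! j)))"

definition muf :: "complex list \<Rightarrow> real" where
  "muf Zs = (\<Sum>k<length Zs. inverse (norm (Bk Zs k (Zs ! k))))"

definition Mf :: "(complex \<Rightarrow> complex) \<Rightarrow> complex set \<Rightarrow> complex list \<Rightarrow> real" where
  "Mf q E Zs = (SUP z\<in>E. norm (Bq q Zs z))"

definition Vn :: "(complex \<Rightarrow> complex) \<Rightarrow> complex set \<Rightarrow> nat \<Rightarrow> real" where
  "Vn q E n = (SUP Zs\<in>{Zs. length Zs = n \<and> set Zs \<subseteq> E}. Vf q Zs)"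

definition nontangential_limit_points :: "complex set \<Rightarrow> complex set" where
  "nontangential_limit_points E = {\<zeta>. norm \<zeta> = 1 \<and>
     (\<exists>w::nat \<Rightarrow> complex. (\<forall>n. w n \<in> E) \<and> w \<longlonglongrightarrow> \<zeta> \<and>
        (\<exists>C. \<forall>n. norm (w n - \<zeta>) \<le> C * (1 - norm (w n))))}"

text \<open>Lebesgue (arc-length) measure zero on the unit circle, via the parametrisation t \<mapsto> exp(i t).\<close>
definition circle_null :: "complex set \<Rightarrow> bool" where
  "circle_null A \<longleftrightarrow> {t\<in>{0..2*pi}. cis t \<in> A} \<in> null_sets lborel"

definition admissible_q :: "complex set \<Rightarrow> (complex \<Rightarrow> complex) \<Rightarrow> bool" where
  "admissible_q E q \<longleftrightarrow>
     (if closure E \<inter> sphere 0 1 = {} then (\<forall>z\<in>ball 0 1. q z = 1)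
      else q holomorphic_on ball 0 1 \<and>
           (\<forall>z\<in>ball 0 1. 0 < norm (q z) \<and> norm (q z) < 1) \<and>
           (\<forall>\<epsilon>>0. \<exists>\<delta>>0. \<forall>z\<in>E. norm z > 1 - \<delta> \<longrightarrow> norm (q z) < \<epsilon>) \<and>
           (SUP z\<in>ball 0 1. norm (q z)) = 1)"

end

theory Submission
  imports Defs "HOL-Complex_Analysis.Riemann_Mapping"
begin

lemma denom_nz: "norm a < 1 \<Longrightarrow> norm z < 1 \<Longrightarrow> 1 - cnj a * z \<noteq> 0"
proof
  assume a: "norm a < 1" "norm z < 1" "1 - cnj a * z = 0"
  then have "cnj a * z = 1" by simp
  then have "norm (cnj a * z) = 1" by simp
  moreover have "norm (cnj a * z) < 1" using a(1,2)
    by (simp add: norm_mult) (metis abs_norm_cancel mult_le_one norm_ge_zero order_less_imp_le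
        less_le mult_strict_mono' one_neq_zero mult_1 mult_less_cancel_left1 norm_mult norm_one)
  ultimately show False by simp
qed

lemma bfac_lt1: "norm a < 1 \<Longrightarrow> norm z < 1 \<Longrightarrow> norm (bfac a z) < 1"
  using Moebius_function_norm_lt_1[of a z 0] by (simp add: Moebius_function_simple bfac_def)

lemma bfac_sym: "norm (bfac a z) = norm (bfac z a)"
proof -
  have "norm (1 - cnj a * z) = norm (1 - cnj z * a)"
  proof -
    have "cnj (1 - cnj a * z) = 1 - cnj z * a" by (simp add: mult.commute)
    then show ?thesis by (metis complex_mod_cnj)
  qed
  moreover have "norm (z - a) = norm (a - z)" by (simp add: norm_minus_commute)
  ultimately show ?thesis by (simp add: bfac_def norm_divide)
qed

lemma bfac_zero: "norm a < 1 \<Longrightarrow> norm z < 1 \<Longrightarrow> bfac a z = 0 \<longleftrightarrow> z = a"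
  using denom_nz[of a z] by (simp add: bfac_def)

lemma Bl_Nil: "Bl [] z = 1" by (simp add: Bl_def)

lemma Bl_snoc: "Bl (L @ [w]) z = Bl L z * bfac w z"
  unfolding Bl_def by (simp add: nth_append)

lemma Bl_list: "Bl L z = prod_list (map (\<lambda>a. bfac a z) L)"
  by (induction L rule: rev_induct) (simp_all add: Bl_Nil Bl_snoc)

lemma Bl_append: "Bl (A @ B) z = Bl A z * Bl B z"
  by (simp add: Bl_list)

lemma Vf_Nil: "Vf q [] = 1" by (simp add: Vf_def)

lemma Vf_snoc: "Vf q (L @ [w]) = Vf q L * norm (Bq q L w)"
  unfolding Vf_def by (simp add: nth_append)

lemma Vf_remove:
  "Vf q (xs @ z # ys) = Vf q (xs @ ys) * norm (q z) * norm (Bl xs z) *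
      prod_list (map (\<lambda>y. norm (bfac z y)) ys)"
proof (induction ys rule: rev_induct)
  case Nil
  show ?case using Vf_snoc[of q xs z] by (simp add: Bq_def norm_mult)
next
  case (snoc y ys)
  have "Vf q (xs @ z # ys @ [y]) = Vf q (xs @ z # ys) * norm (Bq q (xs @ z # ys) y)"
    using Vf_snoc[of q "xs @ z # ys" y] by simp
  moreover have "Vf q (xs @ ys @ [y]) = Vf q (xs @ ys) * norm (Bq q (xs @ ys) y)"
    using Vf_snoc[of q "xs @ ys" y] by simp
  moreover have "Bq q (xs @ z # ys) y = Bq q (xs @ ys) y * bfac z y"
    by (simp add: Bq_def Bl_list)
  ultimately show ?case using snoc by (simp add: norm_mult)
qed

lemma Bk_snoc: "k < length L \<Longrightarrow> Bk (L @ [y]) k u = Bk L k u * bfac y u"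
proof -
  assume k: "k < length L"
  have S: "{j. j < length (L @ [y]) \<and> j \<noteq> k} = insert (length L) {j. j < length L \<and> j \<noteq> k}"
    using k by auto
  have "Bk (L @ [y]) k u = bfac y u * (\<Prod>j\<in>{j. j < length L \<and> j \<noteq> k}. bfac ((L@[y]) ! j) u)"
    unfolding Bk_def S by (subst prod.insert) auto
  also have "(\<Prod>j\<in>{j. j < length L \<and> j \<noteq> k}. bfac ((L@[y]) ! j) u) = Bk L k u"
    unfolding Bk_def by (rule prod.cong) (auto simp: nth_append)
  finally show ?thesis by simp
qed

lemma Bk_split: "Bk (xs @ z # ys) (length xs) u = Bl xs u * Bl ys u"
proof (induction ys rule: rev_induct)
  case Nil
  have S: "{j. j < length (xs @ [z]) \<and> j \<noteq> length xs} = {..<length xs}" by auto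
  show ?case unfolding Bk_def S Bl_def Bl_Nil by (simp add: nth_append)
next
  case (snoc y ys)
  then show ?case using Bk_snoc[of "length xs" "xs @ z # ys" y u] by (simp add: Bl_snoc)
qed


lemma cont_bfac:
  assumes "continuous_on (ball 0 1) g" "continuous_on (ball 0 1) h"
    "\<And>w. w \<in> ball 0 1 \<Longrightarrow> g w \<in> ball 0 1" "\<And>w. w \<in> ball 0 1 \<Longrightarrow> h w \<in> ball 0 1"
  shows "continuous_on (ball 0 1) (\<lambda>w. bfac (g w) (h w))"
  unfolding bfac_def
  using assms denom_nz
  by (intro continuous_intros) auto

lemma cont_prodlist:
  fixes f :: "'b \<Rightarrow> complex \<Rightarrow> real"
  assumes "\<And>y. y \<in> set ys \<Longrightarrow> continuous_on S (f y)"
  shows "continuous_on S (\<lambda>w. prod_list (map (\<lambda>y. f y w) ys))"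
  using assms by (induction ys) (auto intro!: continuous_intros)

lemma q_props:
  assumes "admissible_q E q"
  shows "continuous_on (ball 0 1) q" "\<And>z. z \<in> ball 0 1 \<Longrightarrow> norm (q z) \<le> 1"
    "\<And>z. z \<in> ball 0 1 \<Longrightarrow> q z \<noteq> 0"
proof -
  show "continuous_on (ball 0 1) q"
  proof (cases "closure E \<inter> sphere 0 1 = {}")
    case True
    then have "\<forall>z\<in>ball 0 1. q z = 1" using assms by (simp add: admissible_q_def)
    then show ?thesis using continuous_on_cong[of "ball 0 1" "ball 0 1" q "\<lambda>_. 1"] by auto
  next
    case False
    then show ?thesis using assms holomorphic_on_imp_continuous_on by (auto simp: admissible_q_def)
  qed
  have H: "\<forall>z\<in>ball 0 1. norm (q z) \<le> 1 \<and> q z \<noteq> 0"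
  proof (cases "closure E \<inter> sphere 0 1 = {}")
    case True
    then show ?thesis using assms by (simp add: admissible_q_def)
  next
    case False
    then show ?thesis using assms by (auto simp: admissible_q_def less_imp_le)
  qed
  show "\<And>z. z \<in> ball 0 1 \<Longrightarrow> norm (q z) \<le> 1" using H by blast
  show "\<And>z. z \<in> ball 0 1 \<Longrightarrow> q z \<noteq> 0" using H by blast
qed

lemma norm_prodlist: "norm (prod_list (map f xs)) = prod_list (map (\<lambda>x. norm (f x :: complex)) xs)"
  by (induction xs) (simp_all add: norm_mult)

lemma closure_le:
  assumes "continuous_on (ball 0 1) f" "x \<in> closure E" "x \<in> ball 0 1"
    "\<And>e. e \<in> E \<Longrightarrow> f e \<le> (C::real)"
  shows "f x \<le> C"
proof -
  obtain s where s: "\<And>n. s n \<in> E" "s \<longlonglongrightarrow> x" using assms(2) closure_sequential by blast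
  have "isCont f x" using assms(1,3) continuous_on_eq_continuous_at[of "ball 0 1" f] by auto
  then have "(\<lambda>n. f (s n)) \<longlonglongrightarrow> f x" using s(2) isCont_tendsto_compose by blast
  then show ?thesis using s(1) assms(4) by (meson LIMSEQ_le_const2)
qed

context
  fixes E :: "complex set" and q :: "complex \<Rightarrow> complex"
  assumes EU: "E \<subseteq> ball 0 1" and adm: "admissible_q E q"
begin

lemma Vf_nonneg: "0 \<le> Vf q L"
  unfolding Vf_def by (simp add: prod_nonneg)

lemma Bl_le1: "set L \<subseteq> ball 0 1 \<Longrightarrow> w \<in> ball 0 1 \<Longrightarrow> norm (Bl L w) \<le> 1"
proof (induction L rule: rev_induct)
  case Nil then show ?case by (simp add: Bl_Nil)
next
  case (snoc x xs)
  then have "norm (bfac x w) \<le> 1" using bfac_lt1[of x w] by auto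
  moreover have "norm (Bl xs w) \<le> 1" using snoc by auto
  ultimately show ?case by (simp add: Bl_snoc norm_mult mult_le_one)
qed

lemma Vf_le1: "set L \<subseteq> ball 0 1 \<Longrightarrow> Vf q L \<le> 1"
proof (induction L rule: rev_induct)
  case Nil then show ?case by (simp add: Vf_Nil)
next
  case (snoc x xs)
  have "norm (Bl xs x) \<le> 1" using snoc Bl_le1 by auto
  moreover have "norm (q x) \<le> 1" using snoc q_props(2)[OF adm] by auto
  ultimately have "norm (Bq q xs x) \<le> 1" by (simp add: Bq_def norm_mult mult_le_one)
  moreover have "Vf q xs \<le> 1" using snoc by auto
  ultimately show ?case by (simp add: Vf_snoc mult_le_one Vf_nonneg)
qed

lemma Vf_pos: "set L \<subseteq> ball 0 1 \<Longrightarrow> distinct L \<Longrightarrow> 0 < Vf q L"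
proof (induction L rule: rev_induct)
  case Nil then show ?case by (simp add: Vf_Nil)
next
  case (snoc x xs)
  have "Bl xs x \<noteq> 0" using snoc bfac_zero unfolding Bl_list
    by (auto simp: prod_list_zero_iff)
  moreover have "q x \<noteq> 0" using snoc q_props(3)[OF adm] by auto
  ultimately show ?case using snoc by (simp add: Vf_snoc Bq_def)
qed

lemma bdd: "bdd_above (Vf q ` {Zs. length Zs = m \<and> set Zs \<subseteq> E})"
  using Vf_le1 EU by (intro bdd_aboveI[of _ 1]) auto

lemma Vn_pos: assumes "infinite E" shows "0 < Vn q E m"
proof -
  obtain A where A: "A \<subseteq> E" "finite A" "card A = m" using infinite_arbitrarily_large[OF assms] by blast
  obtain L where L: "set L = A" "distinct L" using finite_distinct_list[OF A(2)] by blast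
  have len: "length L = m" using L A distinct_card by fastforce
  have "0 < Vf q L" using Vf_pos L A EU by auto
  also have "Vf q L \<le> Vn q E m" unfolding Vn_def
    by (rule cSUP_upper[OF _ bdd]) (use L A len in auto)
  finally show ?thesis .
qed

lemma cont_Vf:
  assumes "set xs \<subseteq> ball 0 1" "set ys \<subseteq> ball 0 1"
  shows "continuous_on (ball 0 1) (\<lambda>w. Vf q (xs @ w # ys))"
proof -
  have "continuous_on (ball 0 1) (\<lambda>w. Vf q (xs @ ys) * norm (q w) *
      prod_list (map (\<lambda>y. norm (bfac y w)) xs) * prod_list (map (\<lambda>y. norm (bfac w y)) ys))"
    using assms q_props(1)[OF adm]
    by (intro continuous_intros cont_prodlist continuous_on_norm cont_bfac) auto
  then show ?thesis by (simp add: Vf_remove Bl_list norm_prodlist mult_ac)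
qed

lemma Vf_closure:
  "set Ys \<subseteq> E \<Longrightarrow> set Xs \<subseteq> closure E \<inter> ball 0 1 \<Longrightarrow>
    Vf q (Ys @ Xs) \<le> Vn q E (length Ys + length Xs)"
proof (induction Xs arbitrary: Ys)
  case Nil
  then show ?case unfolding Vn_def by (intro cSUP_upper[OF _ bdd]) auto
next
  case (Cons x Xs)
  have "Vf q (Ys @ x # Xs) \<le> Vn q E (length Ys + length (x # Xs))"
  proof (rule closure_le[where f="\<lambda>w. Vf q (Ys @ w # Xs)"])
    show "continuous_on (ball 0 1) (\<lambda>w. Vf q (Ys @ w # Xs))"
      using Cons EU by (intro cont_Vf) auto
    fix e assume "e \<in> E"
    then show "Vf q (Ys @ e # Xs) \<le> Vn q E (length Ys + length (x # Xs))"
      using Cons.IH[of "Ys @ [e]"] Cons.prems by auto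
  qed (use Cons in auto)
  then show ?case by simp
qed

end


theorem proposition3p6:
  fixes E :: "complex set" and q :: "complex \<Rightarrow> complex" and n :: nat
    and zs \<zeta>s :: "complex list"
  assumes "E \<subseteq> ball 0 1" and "infinite E"
    and "circle_null (nontangential_limit_points E)"
    and "admissible_q E q"
    and "length zs = n" and "set zs \<subseteq> closure E \<inter> ball 0 1"
    and "length \<zeta>s = n + 1" and "set \<zeta>s \<subseteq> closure E \<inter> ball 0 1"
    and "Vf q zs = Vn q E n" and "Vf q \<zeta>s = Vn q E (n + 1)"
  shows "muf \<zeta>s * Mf q E zs \<le> real (n + 1) * (SUP z\<in>E. norm (q z))"
proof -
  note VC = Vf_closure[OF assms(1) assms(4), of "[]", simplified]
  define C where "C = Vn q E n"
  define D where "D = Vn q E (n + 1)"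
  define Qs where "Qs = (SUP z\<in>E. norm (q z))"
  have Cpos: "0 < C" unfolding C_def using Vn_pos[OF assms(1,4,2)] .
  have Dpos: "0 < D" unfolding D_def using Vn_pos[OF assms(1,4,2)] .
  have Ene: "E \<noteq> {}" using assms(2) by auto
  have qc: "continuous_on (ball 0 1) q" using q_props(1)[OF assms(4)] .
  have qle: "\<And>z. z \<in> ball 0 1 \<Longrightarrow> norm (q z) \<le> 1" using q_props(2)[OF assms(4)] .
  have Bw: "norm (Bq q zs w) \<le> D / C" if w: "w \<in> E" for w
  proof -
    have "Vf q (zs @ [w]) \<le> D"
      proof -
      have "w \<in> closure E" using w closure_subset by blast
      moreover have "w \<in> ball 0 1" using w assms(1) by blast
      ultimately have "set (zs @ [w]) \<subseteq> closure E \<inter> ball 0 1" using assms(6) by auto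
      from Vf_closure[OF assms(1) assms(4) _ this, of "[]"]
      show ?thesis using assms(5) by (simp add: D_def)
    qed
    then have "C * norm (Bq q zs w) \<le> D" using Vf_snoc[of q zs w] assms(9) C_def by simp
    then show ?thesis using Cpos by (simp add: pos_le_divide_eq mult.commute)
  qed
  have bddM: "bdd_above ((\<lambda>z. norm (Bq q zs z)) ` E)" using Bw by (intro bdd_aboveI[of _ "D / C"]) auto
  have Mle: "Mf q E zs \<le> D / C" unfolding Mf_def using Ene Bw by (intro cSUP_least) auto
  have Mge: "0 \<le> Mf q E zs"
  proof -
    obtain e where "e \<in> E" using Ene by blast
    then have "norm (Bq q zs e) \<le> Mf q E zs" unfolding Mf_def by (intro cSUP_upper[OF _ bddM])
    then show ?thesis by (meson norm_ge_zero order_trans)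
  qed
  have bddQ: "bdd_above ((\<lambda>z. norm (q z)) ` E)" using qle assms(1) by (intro bdd_aboveI[of _ 1]) auto
  have qQ: "norm (q z) \<le> Qs" if "z \<in> closure E" "z \<in> ball 0 1" for z
    using closure_le[of "\<lambda>z. norm (q z)" z E Qs] that qc unfolding Qs_def
    by (auto intro: continuous_on_norm cSUP_upper[OF _ bddQ])
  have tm: "inverse (norm (Bk \<zeta>s k (\<zeta>s ! k))) * Mf q E zs \<le> Qs" if k: "k < n + 1" for k
  proof -
    define xs where "xs = take k \<zeta>s"
    define z where "z = \<zeta>s ! k"
    define ys where "ys = drop (Suc k) \<zeta>s"
    have split: "\<zeta>s = xs @ z # ys" unfolding xs_def z_def ys_def using k assms(7)
      by (simp add: id_take_nth_drop)
    have lx: "length xs = k" unfolding xs_def using k assms(7) by simp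
    have zin: "z \<in> closure E" "z \<in> ball 0 1" using split assms(8) by auto
    define P where "P = norm (Bk \<zeta>s k z)"
    have P: "P = norm (Bl xs z) * norm (Bl ys z)"
      unfolding P_def using Bk_split[of xs z ys z] split lx by (simp add: norm_mult)
    have ysn: "prod_list (map (\<lambda>y. norm (bfac z y)) ys) = norm (Bl ys z)"
      by (simp add: Bl_list norm_prodlist bfac_sym)
    have DV: "D = Vf q (xs @ ys) * norm (q z) * P"
      using Vf_remove[of q xs z ys] split assms(10) D_def P ysn by (simp add: mult_ac)
    have "Vf q (xs @ ys) \<le> C"
      proof -
      have "set (xs @ ys) \<subseteq> closure E \<inter> ball 0 1" using split assms(8) by auto
      from Vf_closure[OF assms(1) assms(4) _ this, of "[]"]
      show ?thesis using split assms(7) by (simp add: C_def)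
    qed
    then have DC: "D \<le> C * norm (q z) * P"
      using DV by (simp add: P_def mult_right_mono)
    have Ppos: "0 < P"
    proof (rule ccontr)
      assume "\<not> 0 < P"
      then have "P = 0" using P_def by simp
      then show False using DC Dpos by simp
    qed
    have "inverse P * Mf q E zs \<le> inverse P * (D / C)"
      using Mle Ppos by (intro mult_left_mono) auto
    also have "\<dots> \<le> norm (q z)"
      using DC Ppos Cpos by (simp add: field_simps)
    also have "\<dots> \<le> Qs" using qQ zin by blast
    finally show ?thesis unfolding P_def z_def .
  qed
  have "muf \<zeta>s * Mf q E zs = (\<Sum>k<n + 1. inverse (norm (Bk \<zeta>s k (\<zeta>s ! k))) * Mf q E zs)"
    unfolding muf_def assms(7) by (rule sum_distrib_right)
  also have "\<dots> \<le> (\<Sum>k<n + 1. Qs)" using tm by (intro sum_mono) auto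
  finally show ?thesis unfolding Qs_def by simp
qed

end
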